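(* For every graph $G$ and every independent set $I$ in $G$ we have $\mu_\alpha(G-N[I])\leq\mu_\alpha(G)$.
   Context: All graphs are finite and simple; the null graph is allowed. $N[I]$ is the closed neighborhood of $I$ (the vertices of $I$ together with all their neighbors), and $G-N[I]$ is obtained by deleting these vertices. For a graph $H$, $\alpha(H)$ is the maximum size of an independent set, $i(H)$ the minimum size of an inclusion-maximal independent set (both $0$ for the null graph), and $\mu_\alpha(H)=\alpha(H)-i(H)$. *)

theory Defs
  imports Main
begin

definition graph :: "'a set \<Rightarrow> 'a set set \<Rightarrow> bool" where
  "graph V E \<longleftrightarrow> finite V \<and> (\<forall>e\<in>E. e \<subseteq> V \<and> card e = 2)"

definition independent :: "'a set \<Rightarrow> 'a set set \<Rightarrow> 'a set \<Rightarrow> bool" where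
  "independent V E S \<longleftrightarrow> S \<subseteq> V \<and> (\<forall>u\<in>S. \<forall>v\<in>S. {u, v} \<notin> E)"

definition maximal_independent :: "'a set \<Rightarrow> 'a set set \<Rightarrow> 'a set \<Rightarrow> bool" where
  "maximal_independent V E S \<longleftrightarrow> independent V E S \<and>
     (\<forall>T. independent V E T \<and> S \<subseteq> T \<longrightarrow> T = S)"

text \<open>alpha: maximum size of an independent set; i: minimum size of an
  inclusion-maximal independent set (both 0 for the null graph).\<close>

definition alpha :: "'a set \<Rightarrow> 'a set set \<Rightarrow> nat" where
  "alpha V E = Max (card ` {S. independent V E S})"

definition indep_dom :: "'a set \<Rightarrow> 'a set set \<Rightarrow> nat" where
  "indep_dom V E = Min (card ` {S. maximal_independent V E S})"

definition mu_alpha :: "'a set \<Rightarrow> 'a set set \<Rightarrow> int" where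
  "mu_alpha V E = int (alpha V E) - int (indep_dom V E)"

definition closed_nbhd :: "'a set \<Rightarrow> 'a set set \<Rightarrow> 'a set \<Rightarrow> 'a set" where
  "closed_nbhd V E I = I \<union> {v\<in>V. \<exists>u\<in>I. {u, v} \<in> E}"

definition induced_edges :: "'a set set \<Rightarrow> 'a set \<Rightarrow> 'a set set" where
  "induced_edges E W = {e\<in>E. e \<subseteq> W}"

end

theory Submission
  imports Defs
begin

lemma indep_fin: "finite V \<Longrightarrow> finite (card ` {S. independent V E S})"
  by (rule finite_imageI, rule finite_subset[of _ "Pow V"]) (auto simp: independent_def)

lemma indep_ne: "{S. independent V E S} \<noteq> {}"
  by (auto simp: independent_def)

lemma alpha_ge: "finite V \<Longrightarrow> independent V E S \<Longrightarrow> card S \<le> alpha V E"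
  unfolding alpha_def by (rule Max_ge) (auto simp: indep_fin)

lemma alpha_attained: "finite V \<Longrightarrow> \<exists>S. independent V E S \<and> card S = alpha V E"
proof -
  assume f: "finite V"
  have "alpha V E \<in> card ` {S. independent V E S}"
    unfolding alpha_def by (rule Max_in) (use f indep_fin indep_ne in auto)
  then show ?thesis by auto
qed

lemma maxind_exists: "finite V \<Longrightarrow> \<exists>S. maximal_independent V E S"
proof -
  assume f: "finite V"
  obtain S where S: "independent V E S" "card S = alpha V E" using alpha_attained f by blast
  have "maximal_independent V E S"
    unfolding maximal_independent_def
  proof (intro conjI allI impI)
    fix T assume T: "independent V E T \<and> S \<subseteq> T"
    have "card T \<le> card S" using alpha_ge[OF f] T S by auto
    moreover have "finite T" using T f by (auto simp: independent_def intro: finite_subset)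
    ultimately show "T = S" using T card_subset_eq card_mono by (metis antisym)
  qed (use S in auto)
  then show ?thesis by blast
qed

lemma maxind_fin: "finite V \<Longrightarrow> finite (card ` {S. maximal_independent V E S})"
  by (rule finite_imageI, rule finite_subset[of _ "Pow V"]) (auto simp: maximal_independent_def independent_def)

lemma dom_le: "finite V \<Longrightarrow> maximal_independent V E S \<Longrightarrow> indep_dom V E \<le> card S"
  unfolding indep_dom_def by (rule Min_le) (auto simp: maxind_fin)

lemma dom_attained: "finite V \<Longrightarrow> \<exists>S. maximal_independent V E S \<and> card S = indep_dom V E"
proof -
  assume f: "finite V"
  have "indep_dom V E \<in> card ` {S. maximal_independent V E S}"
    unfolding indep_dom_def by (rule Min_in) (use f maxind_fin maxind_exists in auto)
  then show ?thesis by auto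
qed

theorem lemma4:
  fixes V :: "'a set" and E :: "'a set set" and I :: "'a set"
  assumes "graph V E"
    and "independent V E I"
  shows "mu_alpha (V - closed_nbhd V E I) (induced_edges E (V - closed_nbhd V E I))
           \<le> mu_alpha V E"
proof -
  define W where "W = V - closed_nbhd V E I"
  define F where "F = induced_edges E W"
  have fV: "finite V" using assms(1) by (simp add: graph_def)
  have fW: "finite W" using fV by (simp add: W_def)
  have IV: "I \<subseteq> V" and Iind: "\<forall>u\<in>I. \<forall>v\<in>I. {u, v} \<notin> E" using assms(2) by (auto simp: independent_def)
  have fI: "finite I" using IV fV finite_subset by blast
  have WI: "W \<inter> I = {}" by (auto simp: W_def closed_nbhd_def)
  have noedge: "\<And>w u. w \<in> W \<Longrightarrow> u \<in> I \<Longrightarrow> {u, w} \<notin> E \<and> {w, u} \<notin> E"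
    by (auto simp: W_def closed_nbhd_def insert_commute)
  have lift: "\<And>S. independent W F S \<Longrightarrow> independent V E (S \<union> I)"
  proof -
    fix S assume S: "independent W F S"
    have SW: "S \<subseteq> W" using S by (simp add: independent_def)
    have "\<forall>u\<in>S. \<forall>v\<in>S. {u, v} \<notin> E"
      using S SW by (auto simp: independent_def F_def induced_edges_def)
    then show "independent V E (S \<union> I)"
      using SW IV Iind noedge by (auto simp: independent_def W_def)
  qed
  obtain S where S: "independent W F S" "card S = alpha W F" using alpha_attained fW by blast
  have SW: "S \<subseteq> W" using S by (simp add: independent_def)
  have cS: "card (S \<union> I) = card S + card I"
    by (rule card_Un_disjoint) (use SW fW fI WI finite_subset in auto)
  have a: "alpha W F + card I \<le> alpha V E"
    using alpha_ge[OF fV lift[OF S(1)]] cS S(2) by simp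
  obtain T where T: "maximal_independent W F T" "card T = indep_dom W F" using dom_attained fW by blast
  have TW: "T \<subseteq> W" using T by (simp add: maximal_independent_def independent_def)
  have cT: "card (T \<union> I) = card T + card I"
    by (rule card_Un_disjoint) (use TW fW fI WI finite_subset in auto)
  have mT: "maximal_independent V E (T \<union> I)"
    unfolding maximal_independent_def
  proof (intro conjI allI impI)
    show "independent V E (T \<union> I)" using lift T(1) by (simp add: maximal_independent_def)
    fix T' assume H: "independent V E T' \<and> T \<union> I \<subseteq> T'"
    have T'ind: "\<forall>u\<in>T'. \<forall>v\<in>T'. {u, v} \<notin> E" and T'V: "T' \<subseteq> V"
      using H by (auto simp: independent_def)
    have "T' \<subseteq> T \<union> I"
    proof
      fix v assume v: "v \<in> T'"
      show "v \<in> T \<union> I"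
      proof (rule ccontr)
        assume nv: "v \<notin> T \<union> I"
        have vV: "v \<in> V" using v T'V by auto
        show False
        proof (cases "v \<in> closed_nbhd V E I")
          case True
          then obtain u where "u \<in> I" "{u, v} \<in> E" using nv by (auto simp: closed_nbhd_def)
          then show False using T'ind v H by auto
        next
          case False
          then have vW: "v \<in> W" using vV by (simp add: W_def)
          have Ti: "T \<subseteq> W" "\<forall>u\<in>T. \<forall>w\<in>T. {u, w} \<notin> F"
            using T(1) unfolding maximal_independent_def independent_def by auto
          have TT: "T \<subseteq> T'" using H by blast
          have "\<forall>u\<in>insert v T. \<forall>w\<in>insert v T. {u, w} \<notin> F"
          proof (intro ballI)
            fix u w assume u: "u \<in> insert v T" and w: "w \<in> insert v T"
            have "u \<in> T'" "w \<in> T'" using u w v TT by auto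
            then have "{u, w} \<notin> E" using T'ind by blast
            then show "{u, w} \<notin> F" by (simp add: F_def induced_edges_def)
          qed
          then have "independent W F (insert v T)"
            using Ti vW unfolding independent_def by blast
          then have "insert v T = T" using T(1) unfolding maximal_independent_def by blast
          then show False using nv by auto
        qed
      qed
    qed
    then show "T' = T \<union> I" using H by auto
  qed
  have d: "indep_dom V E \<le> indep_dom W F + card I"
    using dom_le[OF fV mT] cT T(2) by simp
  show ?thesis using a d unfolding mu_alpha_def W_def[symmetric] F_def[symmetric] by linarith
qed

end
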